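(* Let $\mathfrak{X}$ be a dual polar scheme of diameter $d$ on the vertex set $X$, with base vertex $u_0$, and let $e\ge 0$ be an integer. Let $(Y,w)$ be a positively weighted subset of $X$ which is a relative $2e$-design with respect to $u_0$, i.e. \[ \sum_{i=1}^p\frac{w(Y_{r_i})}{k_{r_i}}\sum_{x\in X_{r_i}}f(x)=\sum_{y\in Y}w(y)f(y)\quad\text{for every } f\in\mathrm{Hom}_0(X)+\mathrm{Hom}_1(X)+\cdots+\mathrm{Hom}_{2e}(X), \] where $\{r_1,\dots,r_p\}=\{r: Y\cap X_r\ne\emptyset\}$. Let $S=X_{r_1}\cup\cdots\cup X_{r_p}$. Then \[ |Y|\ge\dim\big(\mathrm{Hom}_0(S)+\mathrm{Hom}_1(S)+\cdots+\mathrm{Hom}_e(S)\big). \]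
   Context: Dual polar scheme: $V$ is a finite-dimensional vector space over a finite field with a non-degenerate alternating, Hermitian, or quadratic form of Witt index $d$; $X$ is the set of maximal totally isotropic subspaces, with distance $\partial(x,y)=d-\dim(x\cap y)$ (the distance in the dual polar graph), and relations $R_r=\{(x,y):\partial(x,y)=r\}$. Shells $X_r=\{x:\partial(u_0,x)=r\}$, $k_r=|X_r|$. A weighted subset is $Y\subseteq X$ with $w:Y\to\mathbb{R}_{>0}$; $Y_{r}=Y\cap X_r$, $w(Y_r)=\sum_{y\in Y_r}w(y)$. For $z\in X$, $f_z(x)=1$ if $\partial(u_0,z)+\partial(z,x)=\partial(u_0,x)$ and $0$ otherwise; $\mathrm{Hom}_j(X)=\mathrm{span}\{f_z: z\in X_j\}$ (with $\mathrm{Hom}_j(X)=0$ for $j>d$), and $\mathrm{Hom}_j(S)=\{f|_S: f\in\mathrm{Hom}_j(X)\}$. *)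

theory Defs
  imports "HOL-Analysis.Analysis" "HOL-Library.Function_Algebras"
begin

definition bilin_form :: "('k::field^'n \<Rightarrow> 'k^'n \<Rightarrow> 'k) \<Rightarrow> bool" where
  "bilin_form B \<longleftrightarrow>
     (\<forall>x y z. B (x + y) z = B x z + B y z) \<and> (\<forall>x y z. B x (y + z) = B x y + B x z) \<and>
     (\<forall>a x y. B (a *s x) y = a * B x y) \<and> (\<forall>a x y. B x (a *s y) = a * B x y)"

definition alt_form :: "('k::field^'n \<Rightarrow> 'k^'n \<Rightarrow> 'k) \<Rightarrow> bool" where
  "alt_form B \<longleftrightarrow> bilin_form B \<and> (\<forall>x. B x x = 0) \<and> (\<forall>y. (\<forall>x. B x y = 0) \<longrightarrow> y = 0)"

definition field_involution :: "('k::field \<Rightarrow> 'k) \<Rightarrow> bool" where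
  "field_involution \<sigma> \<longleftrightarrow> (\<forall>a b. \<sigma> (a + b) = \<sigma> a + \<sigma> b) \<and> (\<forall>a b. \<sigma> (a * b) = \<sigma> a * \<sigma> b)
     \<and> (\<forall>a. \<sigma> (\<sigma> a) = a) \<and> \<sigma> \<noteq> id"

definition herm_form :: "('k::field \<Rightarrow> 'k) \<Rightarrow> ('k^'n \<Rightarrow> 'k^'n \<Rightarrow> 'k) \<Rightarrow> bool" where
  "herm_form \<sigma> B \<longleftrightarrow> field_involution \<sigma> \<and>
     (\<forall>x y z. B (x + y) z = B x z + B y z) \<and> (\<forall>x y z. B x (y + z) = B x y + B x z) \<and>
     (\<forall>a x y. B (a *s x) y = a * B x y) \<and> (\<forall>a x y. B x (a *s y) = \<sigma> a * B x y) \<and>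
     (\<forall>x y. B y x = \<sigma> (B x y)) \<and> (\<forall>y. (\<forall>x. B x y = 0) \<longrightarrow> y = 0)"

definition quad_form :: "('k::field^'n \<Rightarrow> 'k) \<Rightarrow> bool" where
  "quad_form Q \<longleftrightarrow> (\<forall>a x. Q (a *s x) = a^2 * Q x) \<and>
     bilin_form (\<lambda>x y. Q (x + y) - Q x - Q y) \<and>
     (\<forall>x. Q x = 0 \<and> (\<forall>y. Q (x + y) - Q x - Q y = 0) \<longrightarrow> x = 0)"

text \<open>tiso W: W is totally isotropic (totally singular in the quadratic case) for one of the
  three admissible kinds of forms\<close>
definition polar_iso :: "(('k::field^'n) set \<Rightarrow> bool) \<Rightarrow> bool" where
  "polar_iso tiso \<longleftrightarrow>
     (\<exists>B. alt_form B \<and> tiso = (\<lambda>W. \<forall>x\<in>W. \<forall>y\<in>W. B x y = 0)) \<or>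
     (\<exists>\<sigma> B. herm_form \<sigma> B \<and> tiso = (\<lambda>W. \<forall>x\<in>W. \<forall>y\<in>W. B x y = 0)) \<or>
     (\<exists>Q. quad_form Q \<and> tiso = (\<lambda>W. \<forall>x\<in>W. Q x = 0))"

definition dpX :: "(('k::field^'n::finite) set \<Rightarrow> bool) \<Rightarrow> ('k^'n) set set" where
  "dpX tiso = {W. vec.subspace W \<and> tiso W \<and>
                 (\<forall>W'. vec.subspace W' \<and> tiso W' \<and> W \<subseteq> W' \<longrightarrow> W' = W)}"

definition witt_index :: "(('k::field^'n::finite) set \<Rightarrow> bool) \<Rightarrow> nat" where
  "witt_index tiso = Max {vec.dim W | W. vec.subspace W \<and> tiso W}"

definition dpdist :: "(('k::field^'n::finite) set \<Rightarrow> bool) \<Rightarrow> ('k^'n) set \<Rightarrow> ('k^'n) set \<Rightarrow> nat" where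
  "dpdist tiso x y = witt_index tiso - vec.dim (x \<inter> y)"

definition shell :: "(('k::field^'n::finite) set \<Rightarrow> bool) \<Rightarrow> ('k^'n) set \<Rightarrow> nat \<Rightarrow> ('k^'n) set set" where
  "shell tiso u0 r = {x \<in> dpX tiso. dpdist tiso u0 x = r}"

definition fz :: "(('k::field^'n::finite) set \<Rightarrow> bool) \<Rightarrow> ('k^'n) set \<Rightarrow> ('k^'n) set \<Rightarrow> ('k^'n) set \<Rightarrow> real" where
  "fz tiso u0 z x = (if dpdist tiso u0 z + dpdist tiso z x = dpdist tiso u0 x then 1 else 0)"

text \<open>Hom_0(X) + ... + Hom_j(X): the span of all f_z with z in X_0 \<union> ... \<union> X_j
  (written out as the set of linear combinations of these finitely many functions)\<close>
definition hom_upto :: "(('k::field^'n::finite) set \<Rightarrow> bool) \<Rightarrow> ('k^'n) set \<Rightarrow> nat \<Rightarrow> (('k^'n) set \<Rightarrow> real) set" where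
  "hom_upto tiso u0 j = {g. \<exists>c. g = (\<lambda>x. \<Sum>z\<in>{z \<in> dpX tiso. dpdist tiso u0 z \<le> j}. c z * fz tiso u0 z x)}"

text \<open>restriction of a function to S (represented as the function vanishing outside S)\<close>
definition restr :: "'a set \<Rightarrow> ('a \<Rightarrow> real) \<Rightarrow> 'a \<Rightarrow> real" where
  "restr S f = (\<lambda>x. if x \<in> S then f x else 0)"

definition fscale :: "real \<Rightarrow> ('a \<Rightarrow> real) \<Rightarrow> 'a \<Rightarrow> real" where
  "fscale c f = (\<lambda>x. c * f x)"

interpretation fvs: vector_space "fscale :: real \<Rightarrow> ('a \<Rightarrow> real) \<Rightarrow> 'a \<Rightarrow> real"
  by unfold_locales (auto simp: fscale_def algebra_simps)

end

theory Submission
  imports Defs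
begin

definition ssum :: "('a::ab_group_add) set \<Rightarrow> 'a set \<Rightarrow> 'a set" where
  "ssum U W = {u + w |u w. u \<in> U \<and> w \<in> W}"

locale polar =
  fixes tiso :: "('k::{finite,field}^'n::finite) set \<Rightarrow> bool" and \<beta> :: "'k^'n \<Rightarrow> 'k^'n \<Rightarrow> 'k"
  assumes badd: "\<beta> (x + y) z = \<beta> x z + \<beta> y z"
    and bscale: "\<beta> (a *s x) y = a * \<beta> x y"
    and bsym: "\<beta> x y = 0 \<longleftrightarrow> \<beta> y x = 0"
    and t1: "vec.subspace W \<Longrightarrow> tiso W \<Longrightarrow> x \<in> W \<Longrightarrow> y \<in> W \<Longrightarrow> \<beta> x y = 0"
    and t2: "vec.subspace U \<Longrightarrow> vec.subspace W \<Longrightarrow> tiso U \<Longrightarrow> tiso W \<Longrightarrow>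
        (\<And>u w. u \<in> U \<Longrightarrow> w \<in> W \<Longrightarrow> \<beta> u w = 0) \<Longrightarrow> tiso (ssum U W)"
    and t3: "tiso W \<Longrightarrow> U \<subseteq> W \<Longrightarrow> tiso U"
    and t4: "tiso {0}"

lemma sesq_ok:
  fixes B :: "'k::{finite,field}^'n::finite \<Rightarrow> 'k^'n \<Rightarrow> 'k"
  assumes a1: "\<And>x y z. B (x + y) z = B x z + B y z" and a2: "\<And>x y z. B x (y + z) = B x y + B x z"
    and a3: "\<And>a x y. B (a *s x) y = a * B x y" and sk: "\<And>x y. B x y = 0 \<longleftrightarrow> B y x = 0"
  shows "polar (\<lambda>W. \<forall>x\<in>W. \<forall>y\<in>W. B x y = 0) B"
proof
  fix U W :: "('k^'n) set"
  assume U: "\<forall>x\<in>U. \<forall>y\<in>U. B x y = 0" and W: "\<forall>x\<in>W. \<forall>y\<in>W. B x y = 0"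
    and UW: "\<And>u w. u \<in> U \<Longrightarrow> w \<in> W \<Longrightarrow> B u w = 0"
  show "\<forall>x\<in>ssum U W. \<forall>y\<in>ssum U W. B x y = 0"
  proof (intro ballI)
    fix x y assume "x \<in> ssum U W" "y \<in> ssum U W"
    then obtain u w u' w' where "x = u + w" "y = u' + w'" "u \<in> U" "w \<in> W" "u' \<in> U" "w' \<in> W"
      unfolding ssum_def by blast
    moreover have "B (u + w) (u' + w') = B u u' + B u w' + (B w u' + B w w')"
      by (simp add: a1 a2)
    moreover have "B w u' = 0" if "w \<in> W" "u' \<in> U" using UW[OF that(2,1)] sk by blast
    ultimately show "B x y = 0" using U W UW by simp
  qed
next
  have "B 0 0 = 0" using a3[of 0 0 0] by simp
  then show "\<forall>x\<in>{0}. \<forall>y\<in>{0}. B x y = 0" by simp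
next
  fix x y z show "B (x + y) z = B x z + B y z" by (rule a1)
next
  fix a x y show "B (a *s x) y = a * B x y" by (rule a3)
next
  fix x y show "(B x y = 0) = (B y x = 0)" by (rule sk)
next
  fix W :: "('k^'n) set" and x y assume "\<forall>x\<in>W. \<forall>y\<in>W. B x y = 0" "x \<in> W" "y \<in> W"
  then show "B x y = 0" by blast
next
  fix U W :: "('k^'n) set" assume "\<forall>x\<in>W. \<forall>y\<in>W. B x y = 0" "U \<subseteq> W"
  then show "\<forall>x\<in>U. \<forall>y\<in>U. B x y = 0" by blast
qed

lemma alt_ok:
  fixes B :: "'k::{finite,field}^'n::finite \<Rightarrow> 'k^'n \<Rightarrow> 'k"
  assumes "alt_form B"
  shows "polar (\<lambda>W. \<forall>x\<in>W. \<forall>y\<in>W. B x y = 0) B"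
proof -
  have bl: "bilin_form B" and al: "\<And>x. B x x = 0" using assms by (auto simp: alt_form_def)
  have a1: "\<And>x y z. B (x + y) z = B x z + B y z" and a2: "\<And>x y z. B x (y + z) = B x y + B x z"
    and a3: "\<And>a x y. B (a *s x) y = a * B x y" using bl by (auto simp: bilin_form_def)
  have sk: "B x y = - B y x" for x y
  proof -
    have "0 = B (x + y) (x + y)" using al by simp
    also have "\<dots> = B x x + B x y + (B y x + B y y)" by (simp add: a1 a2)
    also have "\<dots> = B x y + B y x" using al by simp
    finally show ?thesis by (simp add: eq_neg_iff_add_eq_0)
  qed
  show ?thesis by (rule sesq_ok[OF a1 a2 a3]) (subst sk, simp)
qed

lemma herm_ok:
  fixes B :: "'k::{finite,field}^'n::finite \<Rightarrow> 'k^'n \<Rightarrow> 'k"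
  assumes "herm_form \<sigma> B"
  shows "polar (\<lambda>W. \<forall>x\<in>W. \<forall>y\<in>W. B x y = 0) B"
proof -
  note h = assms[unfolded herm_form_def]
  have fi: "field_involution \<sigma>" using h by (rule conjunct1)
  note a1 = h[THEN conjunct2, THEN conjunct1, rule_format]
  note a2 = h[THEN conjunct2, THEN conjunct2, THEN conjunct1, rule_format]
  note a3 = h[THEN conjunct2, THEN conjunct2, THEN conjunct2, THEN conjunct1, rule_format]
  note hs = h[THEN conjunct2, THEN conjunct2, THEN conjunct2, THEN conjunct2, THEN conjunct2, THEN conjunct1, rule_format]
  have sadd: "\<sigma> (a + b) = \<sigma> a + \<sigma> b" for a b using fi unfolding field_involution_def by blast
  have s0: "\<sigma> 0 = 0" using sadd[of 0 0] by (metis add.right_neutral add_left_cancel)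
  have sinv: "\<sigma> (\<sigma> a) = a" for a using fi unfolding field_involution_def by blast
  have sk: "B x y = 0 \<longleftrightarrow> B y x = 0" for x y
  proof
    have "B y x = \<sigma> (B x y)" by (rule hs)
    moreover assume "B x y = 0" ultimately show "B y x = 0" using s0 by simp
  next
    have "B x y = \<sigma> (B y x)" by (rule hs)
    moreover assume "B y x = 0" ultimately show "B x y = 0" using s0 by simp
  qed
  show ?thesis by (rule sesq_ok[OF a1 a2 a3 sk])
qed

lemma quad_ok:
  fixes Q :: "'k::{finite,field}^'n::finite \<Rightarrow> 'k"
  assumes "quad_form Q"
  shows "polar (\<lambda>W. \<forall>x\<in>W. Q x = 0) (\<lambda>x y. Q (x + y) - Q x - Q y)"
proof -
  have q1: "\<And>a x. Q (a *s x) = a^2 * Q x" and bl: "bilin_form (\<lambda>x y. Q (x + y) - Q x - Q y)"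
    using assms by (auto simp: quad_form_def)
  have a1: "\<And>x y z. Q (x + y + z) - Q (x + y) - Q z = (Q (x + z) - Q x - Q z) + (Q (y + z) - Q y - Q z)"
    and a3: "\<And>a x y. Q (a *s x + y) - Q (a *s x) - Q y = a * (Q (x + y) - Q x - Q y)"
    using bl unfolding bilin_form_def by blast+
  have Q0: "Q 0 = 0" using q1[of 0 0] by simp
  show ?thesis
  proof
    fix x y show "(Q (x + y) - Q x - Q y = 0) = (Q (y + x) - Q y - Q x = 0)"
      by (simp add: add.commute algebra_simps)
  next
    fix W :: "('k^'n) set" and x y assume "vec.subspace W" "\<forall>x\<in>W. Q x = 0" "x \<in> W" "y \<in> W"
    then show "Q (x + y) - Q x - Q y = 0"
      by (simp add: vec.subspace_add)
  next
    fix U W :: "('k^'n) set"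
    assume "\<forall>x\<in>U. Q x = 0" "\<forall>x\<in>W. Q x = 0" "\<And>u w. u \<in> U \<Longrightarrow> w \<in> W \<Longrightarrow> Q (u + w) - Q u - Q w = 0"
    then show "\<forall>x\<in>ssum U W. Q x = 0" unfolding ssum_def by fastforce
  next
    fix x y z show "Q (x + y + z) - Q (x + y) - Q z = Q (x + z) - Q x - Q z + (Q (y + z) - Q y - Q z)"
      by (rule a1)
  next
    fix a x y show "Q (a *s x + y) - Q (a *s x) - Q y = a * (Q (x + y) - Q x - Q y)" by (rule a3)
  next
    fix U W :: "('k^'n) set" assume "\<forall>x\<in>W. Q x = 0" "U \<subseteq> W"
    then show "\<forall>x\<in>U. Q x = 0" by blast
  next
    show "\<forall>x\<in>{0}. Q x = 0" using Q0 by simp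
  qed
qed

lemma polar_form_ok:
  fixes tiso :: "('k::{finite,field}^'n::finite) set \<Rightarrow> bool"
  assumes "polar_iso tiso"
  obtains \<beta> where "polar tiso \<beta>"
proof -
  from assms[unfolded polar_iso_def] show ?thesis
  proof (elim disjE exE conjE)
    fix B assume "alt_form B" "tiso = (\<lambda>W. \<forall>x\<in>W. \<forall>y\<in>W. B x y = 0)"
    then show ?thesis using alt_ok[of B] that by simp
  next
    fix \<sigma> B assume "herm_form \<sigma> B" "tiso = (\<lambda>W. \<forall>x\<in>W. \<forall>y\<in>W. B x y = 0)"
    then show ?thesis using herm_ok[of \<sigma> B] that by simp
  next
    fix Q assume "quad_form Q" "tiso = (\<lambda>W. \<forall>x\<in>W. Q x = 0)"
    then show ?thesis using quad_ok[of Q] that by simp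
  qed
qed

context polar
begin

lemma b0: "\<beta> 0 y = 0" using bscale[of 0 0 y] by simp

lemma bdiff: "\<beta> (x - y) z = \<beta> x z - \<beta> y z"
proof -
  have "\<beta> x z = \<beta> ((x - y) + y) z" by simp
  also have "\<dots> = \<beta> (x - y) z + \<beta> y z" by (rule badd)
  finally show ?thesis by simp
qed

definition perp :: "('k^'n) set \<Rightarrow> ('k^'n) set" where
  "perp U = {v. \<forall>u\<in>U. \<beta> v u = 0}"

lemma subspace_ker: "vec.subspace {v. \<beta> v c = 0}"
  unfolding vec.subspace_def by (auto simp: b0 badd bscale)

lemma subspace_perp: "vec.subspace (perp U)"
  unfolding vec.subspace_def perp_def by (auto simp: b0 badd bscale)

lemma subspace_ker2: "vec.subspace {u. \<beta> v u = 0}"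
proof -
  have "{u. \<beta> v u = 0} = {u. \<beta> u v = 0}" using bsym by blast
  then show ?thesis using subspace_ker by simp
qed

lemma perp_span: "C \<subseteq> perp U \<Longrightarrow> vec.span C \<subseteq> perp U"
  by (rule vec.span_minimal[OF _ subspace_perp])

lemma perp_span2: assumes "v \<in> perp C" shows "v \<in> perp (vec.span C)"
proof -
  have "C \<subseteq> {u. \<beta> v u = 0}" using assms by (auto simp: perp_def)
  then have "vec.span C \<subseteq> {u. \<beta> v u = 0}" by (rule vec.span_minimal[OF _ subspace_ker2])
  then show ?thesis by (auto simp: perp_def)
qed

lemma codim1:
  assumes V: "vec.subspace V"
  shows "vec.dim V \<le> vec.dim (V \<inter> {v. \<beta> v c = 0}) + 1"
proof (cases "V \<subseteq> {v. \<beta> v c = 0}")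
  case True then have "V \<inter> {v. \<beta> v c = 0} = V" by blast
  then show ?thesis by simp
next
  case False
  then obtain v0 where v0: "v0 \<in> V" "\<beta> v0 c \<noteq> 0" by blast
  let ?K = "V \<inter> {v. \<beta> v c = 0}"
  have "V \<subseteq> vec.span (insert v0 ?K)"
  proof
    fix v assume v: "v \<in> V"
    define t where "t = \<beta> v c / \<beta> v0 c"
    have "\<beta> (v - t *s v0) c = \<beta> v c - t * \<beta> v0 c" by (simp add: bdiff bscale)
    also have "\<dots> = 0" using v0 by (simp add: t_def)
    finally have "\<beta> (v - t *s v0) c = 0" .
    moreover have "v - t *s v0 \<in> V" using V v v0 vec.subspace_diff vec.subspace_scale by blast
    ultimately have "v - t *s v0 \<in> ?K" by simp
    then have a: "v - t *s v0 \<in> vec.span (insert v0 ?K)" by (simp add: vec.span_base)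
    have b: "t *s v0 \<in> vec.span (insert v0 ?K)" by (simp add: vec.span_base vec.span_scale)
    have "v = (v - t *s v0) + t *s v0" by simp
    then show "v \<in> vec.span (insert v0 ?K)" using vec.span_add[OF a b] by metis
  qed
  then have "vec.dim V \<le> vec.dim (insert v0 ?K)" by (rule vec.dim_mono)
  also have "\<dots> \<le> vec.dim ?K + 1" by (simp add: vec.dim_insert)
  finally show ?thesis .
qed

lemma perp_insert: "perp (insert c C) = perp C \<inter> {v. \<beta> v c = 0}"
  by (auto simp: perp_def)

lemma pairP:
  assumes "finite C" "vec.subspace x"
  shows "vec.dim x \<le> vec.dim (x \<inter> perp C) + card C"
  using assms(1)
proof (induction C rule: finite_induct)
  case empty then show ?case by (simp add: perp_def)
next
  case (insert c C)
  have "vec.subspace (x \<inter> perp C)" using assms(2) subspace_perp vec.subspace_inter by blast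
  from codim1[OF this, of c] have "vec.dim (x \<inter> perp C) \<le> vec.dim (x \<inter> perp (insert c C)) + 1"
    by (simp add: perp_insert Int_assoc)
  with insert show ?case by simp
qed

lemma pairQ:
  assumes W: "vec.subspace W" and x: "vec.subspace x"
    and orth: "\<And>a b. a \<in> x \<Longrightarrow> b \<in> W \<inter> x \<Longrightarrow> \<beta> a b = 0"
  shows "vec.dim x + vec.dim (W \<inter> x) \<le> vec.dim (x \<inter> perp W) + vec.dim W"
proof -
  obtain B0 where B0: "B0 \<subseteq> W \<inter> x" "vec.independent B0" "W \<inter> x \<subseteq> vec.span B0" "card B0 = vec.dim (W \<inter> x)"
    using vec.basis_exists by blast
  obtain B where B: "B0 \<subseteq> B" "B \<subseteq> W" "vec.independent B" "W \<subseteq> vec.span B"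
    using vec.maximal_independent_subset_extend[of B0 W] B0 by blast
  have cB: "card B = vec.dim W" using vec.basis_card_eq_dim[OF B(2,4,3)] .
  define C where "C = B - B0"
  have fin: "finite B" by simp
  have cC: "card C = vec.dim W - vec.dim (W \<inter> x)"
    unfolding C_def using card_Diff_subset[OF finite_subset[OF B(1) fin] B(1)] cB B0(4) by simp
  have le: "vec.dim (W \<inter> x) \<le> vec.dim W" by (rule vec.dim_subset) blast
  have P: "vec.dim x \<le> vec.dim (x \<inter> perp C) + card C" by (rule pairP) (simp_all add: x)
  have "x \<inter> perp C \<subseteq> x \<inter> perp W"
  proof
    fix v assume v: "v \<in> x \<inter> perp C"
    have "v \<in> perp B"
      unfolding perp_def
    proof (rule CollectI, rule ballI)
      fix u assume u: "u \<in> B"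
      show "\<beta> v u = 0"
      proof (cases "u \<in> B0")
        case True then show ?thesis using B0(1) v orth by blast
      next
        case False then show ?thesis using u v by (auto simp: C_def perp_def)
      qed
    qed
    then have "v \<in> perp (vec.span B)" by (rule perp_span2)
    then show "v \<in> x \<inter> perp W" using v B(4) by (auto simp: perp_def)
  qed
  then have "vec.dim (x \<inter> perp C) \<le> vec.dim (x \<inter> perp W)" by (rule vec.dim_subset)
  with P cC le show ?thesis by linarith
qed

end


context polar
begin

abbreviation isub :: "('k^'n) set \<Rightarrow> bool" where "isub W \<equiv> vec.subspace W \<and> tiso W"

lemma fin_isub: "finite {W. isub W}"
  by (rule finite_subset[of _ UNIV]) auto

lemma fin_dims: "finite {vec.dim W |W. isub W}"
  using fin_isub by (simp add: setcompr_eq_image)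

lemma isub0: "isub {0}" using t4 by simp

lemma dims_eq: "{vec.dim W |W. isub W} = vec.dim ` {W. isub W}"
  by (rule setcompr_eq_image)

lemma dim_le_d: assumes "isub W" shows "vec.dim W \<le> witt_index tiso"
proof -
  have "vec.dim W \<in> vec.dim ` {W. isub W}" by (rule imageI) (simp add: assms)
  then show ?thesis unfolding witt_index_def dims_eq by (rule Max_ge[OF fin_dims[unfolded dims_eq]])
qed

lemma ex_d: "\<exists>W. isub W \<and> vec.dim W = witt_index tiso"
proof -
  have "vec.dim ({0} :: ('k^'n) set) \<in> vec.dim ` {W. isub W}" by (rule imageI) (simp add: isub0)
  then have ne: "vec.dim ` {W. isub W} \<noteq> {}" by (intro notI) (simp only: empty_iff)
  have "witt_index tiso \<in> vec.dim ` {W. isub W}"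
    unfolding witt_index_def dims_eq by (rule Max_in[OF fin_dims[unfolded dims_eq] ne])
  then obtain W where "W \<in> {W. isub W}" "witt_index tiso = vec.dim W" by (rule imageE)
  then show ?thesis by auto
qed

lemma X_isub: "x \<in> dpX tiso \<Longrightarrow> isub x" by (simp add: dpX_def)

lemma X_max: "x \<in> dpX tiso \<Longrightarrow> isub V \<Longrightarrow> x \<subseteq> V \<Longrightarrow> V = x" by (simp add: dpX_def)

lemma ext_max:
  assumes "isub W" shows "\<exists>M. M \<in> dpX tiso \<and> W \<subseteq> M"
proof -
  let ?S = "{V. isub V \<and> W \<subseteq> V}"
  have fS: "finite ?S" by (rule finite_subset[of _ UNIV]) auto
  have neS: "?S \<noteq> {}" using assms by blast
  have "Max (vec.dim ` ?S) \<in> vec.dim ` ?S" by (rule Max_in) (use fS neS in auto)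
  then obtain M where M: "M \<in> ?S" "vec.dim M = Max (vec.dim ` ?S)" by (metis (no_types, lifting) imageE)
  have "M \<in> dpX tiso"
    unfolding dpX_def
  proof (intro CollectI conjI allI impI)
    show "vec.subspace M" "tiso M" using M by auto
    fix W' assume W': "vec.subspace W' \<and> tiso W' \<and> M \<subseteq> W'"
    then have "W' \<in> ?S" using M by auto
    then have "vec.dim W' \<le> vec.dim M" using M fS by simp
    then show "W' = M" using vec.subspace_dim_equal[of M W'] W' M by auto
  qed
  then show ?thesis using M by blast
qed

lemma F1:
  assumes M: "M \<in> dpX tiso" and V: "isub V" and VM: "V \<subseteq> perp M"
  shows "V \<subseteq> M"
proof -
  have iM: "isub M" using M by (rule X_isub)
  have orth: "\<beta> u w = 0" if "u \<in> M" "w \<in> V" for u w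
    using VM that bsym by (auto simp: perp_def)
  have "isub (ssum M V)"
    using t2[OF _ _ _ _ orth] iM V vec.subspace_sums[of M V] by (auto simp: ssum_def)
  moreover have "M \<subseteq> ssum M V"
  proof
    fix m assume "m \<in> M" then show "m \<in> ssum M V"
      unfolding ssum_def using vec.subspace_0[of V] V by force
  qed
  ultimately have "ssum M V = M" using X_max[OF M] by blast
  moreover have "V \<subseteq> ssum M V"
  proof
    fix v assume "v \<in> V" then show "v \<in> ssum M V"
      unfolding ssum_def using vec.subspace_0[of M] iM by force
  qed
  ultimately show ?thesis by simp
qed

lemma witt_le:
  assumes U: "U \<in> dpX tiso" and W: "W \<in> dpX tiso"
  shows "vec.dim W \<le> vec.dim U"
proof -
  have iU: "isub U" and iW: "isub W" using U W by (auto dest: X_isub)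
  have Q: "vec.dim W + vec.dim (U \<inter> W) \<le> vec.dim (W \<inter> perp U) + vec.dim U"
    by (rule pairQ) (use iU iW t1 in auto)
  have "isub (W \<inter> perp U)" using iW subspace_perp vec.subspace_inter t3 by blast
  then have "W \<inter> perp U \<subseteq> U" using F1[OF U] by blast
  then have "W \<inter> perp U \<subseteq> U \<inter> W" by blast
  then have "vec.dim (W \<inter> perp U) \<le> vec.dim (U \<inter> W)" by (rule vec.dim_subset)
  with Q show ?thesis by linarith
qed

lemma dimX: assumes "x \<in> dpX tiso" shows "vec.dim x = witt_index tiso"
proof -
  obtain W where W: "isub W" "vec.dim W = witt_index tiso" using ex_d by blast
  obtain M where M: "M \<in> dpX tiso" "W \<subseteq> M" using ext_max[OF W(1)] by blast
  have "vec.dim W \<le> vec.dim M" using M(2) by (rule vec.dim_subset)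
  moreover have "vec.dim M \<le> witt_index tiso" using X_isub[OF M(1)] by (rule dim_le_d)
  ultimately have "vec.dim M = witt_index tiso" using W by simp
  moreover have "vec.dim x = vec.dim M" using witt_le[OF M(1) assms] witt_le[OF assms M(1)] by simp
  ultimately show ?thesis by simp
qed

end


locale polar0 = polar tiso \<beta> for tiso :: "('k::{finite,field}^'n::finite) set \<Rightarrow> bool" and \<beta> +
  fixes u0 :: "('k^'n) set" assumes u0: "u0 \<in> dpX tiso"
begin

abbreviation dd :: nat where "dd \<equiv> witt_index tiso"
abbreviation XX where "XX \<equiv> dpX tiso"

definition le :: "('k^'n) set \<Rightarrow> ('k^'n) set \<Rightarrow> bool" where
  "le a b \<longleftrightarrow> dpdist tiso u0 a + dpdist tiso a b = dpdist tiso u0 b"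

lemma sub_X: "x \<in> XX \<Longrightarrow> vec.subspace x" by (simp add: dpX_def)

lemma le_iff:
  assumes a: "a \<in> XX" and b: "b \<in> XX"
  shows "le a b \<longleftrightarrow> ssum (u0 \<inter> a) (a \<inter> b) = a \<and> u0 \<inter> b \<subseteq> a"
proof -
  have sa: "vec.subspace a" and sb: "vec.subspace b" and su: "vec.subspace u0"
    using a b u0 by (auto intro: sub_X)
  have sP: "vec.subspace (u0 \<inter> a)" and sQ: "vec.subspace (a \<inter> b)" and sB: "vec.subspace (u0 \<inter> b)"
    using sa sb su vec.subspace_inter by blast+
  have gr: "vec.dim (ssum (u0 \<inter> a) (a \<inter> b)) + vec.dim ((u0 \<inter> a) \<inter> (a \<inter> b)) = vec.dim (u0 \<inter> a) + vec.dim (a \<inter> b)"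
    unfolding ssum_def by (rule vec.dim_sums_Int[OF sP sQ])
  have sS: "vec.subspace (ssum (u0 \<inter> a) (a \<inter> b))" unfolding ssum_def by (rule vec.subspace_sums[OF sP sQ])
  have Sa: "ssum (u0 \<inter> a) (a \<inter> b) \<subseteq> a" unfolding ssum_def using sa vec.subspace_add by blast
  have da: "vec.dim a = dd" and db: "vec.dim b = dd" and du: "vec.dim u0 = dd"
    using a b u0 by (auto intro: dimX)
  have d1: "vec.dim (ssum (u0 \<inter> a) (a \<inter> b)) \<le> dd" using vec.dim_subset[OF Sa] da by simp
  have IB: "(u0 \<inter> a) \<inter> (a \<inter> b) \<subseteq> u0 \<inter> b" by blast
  have d2: "vec.dim ((u0 \<inter> a) \<inter> (a \<inter> b)) \<le> vec.dim (u0 \<inter> b)" using vec.dim_subset[OF IB] .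
  have d3: "vec.dim (u0 \<inter> b) \<le> dd" using vec.dim_subset[of "u0 \<inter> b" b] db by auto
  have d4: "vec.dim (u0 \<inter> a) \<le> dd" using vec.dim_subset[of "u0 \<inter> a" a] da by auto
  have d5: "vec.dim (a \<inter> b) \<le> dd" using vec.dim_subset[of "a \<inter> b" a] da by auto
  have L: "le a b \<longleftrightarrow> vec.dim (u0 \<inter> a) + vec.dim (a \<inter> b) = dd + vec.dim (u0 \<inter> b)"
    unfolding le_def dpdist_def using d3 d4 d5 by (simp add: Int_commute) linarith
  show ?thesis
  proof
    assume "le a b"
    with L gr d1 d2 have e1: "vec.dim (ssum (u0 \<inter> a) (a \<inter> b)) = dd"
      and e2: "vec.dim ((u0 \<inter> a) \<inter> (a \<inter> b)) = vec.dim (u0 \<inter> b)" by linarith+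
    have "ssum (u0 \<inter> a) (a \<inter> b) = a" using vec.subspace_dim_equal[OF sS sa Sa] e1 da by simp
    moreover have "(u0 \<inter> a) \<inter> (a \<inter> b) = u0 \<inter> b"
      using vec.subspace_dim_equal[OF vec.subspace_inter[OF sP sQ] sB IB] e2 by simp
    ultimately show "ssum (u0 \<inter> a) (a \<inter> b) = a \<and> u0 \<inter> b \<subseteq> a" by blast
  next
    assume H: "ssum (u0 \<inter> a) (a \<inter> b) = a \<and> u0 \<inter> b \<subseteq> a"
    then have "(u0 \<inter> a) \<inter> (a \<inter> b) = u0 \<inter> b" by blast
    with H gr da L show "le a b" by simp
  qed
qed

lemma le_refl: "a \<in> XX \<Longrightarrow> le a a"
  using dimX[of a] by (simp add: le_def dpdist_def)

lemma le_trans: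
  assumes a: "a \<in> XX" and b: "b \<in> XX" and c: "c \<in> XX" and ab: "le a b" and bc: "le b c"
  shows "le a c"
proof -
  have A: "ssum (u0 \<inter> a) (a \<inter> b) = a" "u0 \<inter> b \<subseteq> a" using ab le_iff[OF a b] by auto
  have B: "ssum (u0 \<inter> b) (b \<inter> c) = b" "u0 \<inter> c \<subseteq> b" using bc le_iff[OF b c] by auto
  have sa: "vec.subspace a" using a by (rule sub_X)
  have "a \<subseteq> ssum (u0 \<inter> a) (a \<inter> c)"
  proof
    fix v assume "v \<in> a"
    then obtain p q where pq: "v = p + q" "p \<in> u0 \<inter> a" "q \<in> a \<inter> b" using A(1) unfolding ssum_def by blast
    then obtain p' q' where pq': "q = p' + q'" "p' \<in> u0 \<inter> b" "q' \<in> b \<inter> c" using B(1) unfolding ssum_def by blast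
    have p'a: "p' \<in> a" using pq'(2) A(2) by blast
    have "q' = q - p'" using pq'(1) by simp
    then have q'a: "q' \<in> a" using vec.subspace_diff[OF sa _ p'a] pq(3) by simp
    have "p + p' \<in> u0 \<inter> a" using pq(2) p'a pq'(2) vec.subspace_add sa sub_X[OF u0] by blast
    moreover have "v = (p + p') + q'" using pq pq' by (simp add: add.assoc)
    ultimately show "v \<in> ssum (u0 \<inter> a) (a \<inter> c)" unfolding ssum_def using q'a pq'(3) by blast
  qed
  moreover have "ssum (u0 \<inter> a) (a \<inter> c) \<subseteq> a" unfolding ssum_def using sa vec.subspace_add by blast
  moreover have "u0 \<inter> c \<subseteq> a" using A(2) B(2) by blast
  ultimately show ?thesis using le_iff[OF a c] by blast
qed

lemma le_antisym:
  assumes a: "a \<in> XX" and b: "b \<in> XX" and ab: "le a b" and ba: "le b a"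
  shows "a = b"
proof -
  have A: "ssum (u0 \<inter> a) (a \<inter> b) = a" "u0 \<inter> b \<subseteq> a" using ab le_iff[OF a b] by auto
  have B: "ssum (u0 \<inter> b) (b \<inter> a) = b" "u0 \<inter> a \<subseteq> b" using ba le_iff[OF b a] by auto
  have "a \<subseteq> b"
  proof
    fix v assume "v \<in> a"
    then obtain p q where pq: "v = p + q" "p \<in> u0 \<inter> a" "q \<in> a \<inter> b" using A(1) unfolding ssum_def by blast
    then show "v \<in> b" using B(2) vec.subspace_add[OF sub_X[OF b]] by blast
  qed
  then show ?thesis using X_max[OF a] X_isub[OF b] by blast
qed


lemma ssum_sub: "vec.subspace a \<Longrightarrow> P \<subseteq> a \<Longrightarrow> Q \<subseteq> a \<Longrightarrow> ssum P Q \<subseteq> a"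
  unfolding ssum_def using vec.subspace_add by blast

lemma join:
  assumes z: "z \<in> XX" and z': "z' \<in> XX" and x: "x \<in> XX" and zx: "le z x" and z'x: "le z' x"
  shows "\<exists>m\<in>XX. le z m \<and> le z' m \<and> le m x \<and>
           dpdist tiso u0 m \<le> dpdist tiso u0 z + dpdist tiso u0 z' \<and>
           (\<forall>y\<in>XX. le z y \<longrightarrow> le z' y \<longrightarrow> le y x \<longrightarrow> le m y)"
proof -
  define W where "W = u0 \<inter> z \<inter> z'"
  define V where "V = x \<inter> perp W"
  define M where "M = ssum W V"
  have iu: "isub u0" and iz: "isub z" and iz': "isub z'" and ix: "isub x"
    using u0 z z' x by (auto dest: X_isub)
  have Z: "ssum (u0 \<inter> z) (z \<inter> x) = z" "u0 \<inter> x \<subseteq> z" using zx le_iff[OF z x] by auto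
  have Z': "ssum (u0 \<inter> z') (z' \<inter> x) = z'" "u0 \<inter> x \<subseteq> z'" using z'x le_iff[OF z' x] by auto
  have AW: "u0 \<inter> x \<subseteq> W" using Z Z' by (auto simp: W_def)
  have sW: "vec.subspace W" unfolding W_def using iu iz iz' vec.subspace_inter by blast
  have sV: "vec.subspace V" unfolding V_def using ix subspace_perp vec.subspace_inter by blast
  have "tiso W" by (rule t3[of u0]) (use iu in \<open>auto simp: W_def\<close>)
  then have iW: "isub W" using sW by simp
  have "tiso V" by (rule t3[of x]) (use ix in \<open>auto simp: V_def\<close>)
  then have iV: "isub V" using sV by simp
  have orth: "\<beta> u w = 0" if "u \<in> W" "w \<in> V" for u w
    using that bsym by (auto simp: V_def perp_def)
  have sM: "vec.subspace M" unfolding M_def ssum_def by (rule vec.subspace_sums[OF sW sV])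
  have tM: "tiso M" unfolding M_def by (rule t2[OF sW sV _ _ orth]) (use iW iV in auto)
  have W0: "0 \<in> W" and V0: "0 \<in> V" using sW sV vec.subspace_0 by auto
  have WM: "W \<subseteq> M" unfolding M_def ssum_def using V0 by force
  have VM: "V \<subseteq> M" unfolding M_def ssum_def using W0 by force
  have dx: "vec.dim x = dd" using x by (rule dimX)
  have WV: "W \<inter> V = W \<inter> x"
  proof -
    have "W \<inter> x \<subseteq> perp W" using t1[of u0] iu by (auto simp: perp_def W_def)
    then show ?thesis by (auto simp: V_def)
  qed
  have gr: "vec.dim M + vec.dim (W \<inter> V) = vec.dim W + vec.dim V"
    unfolding M_def ssum_def by (rule vec.dim_sums_Int[OF sW sV])
  have Q: "vec.dim x + vec.dim (W \<inter> x) \<le> vec.dim V + vec.dim W"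
    unfolding V_def by (rule pairQ[OF sW]) (use ix t1 in auto)
  have dM: "vec.dim M = dd"
  proof -
    have "vec.dim M \<le> dd" using sM tM dim_le_d by blast
    moreover have "dd \<le> vec.dim M" using gr[unfolded WV] Q dx by linarith
    ultimately show ?thesis by simp
  qed
  have MX: "M \<in> XX"
    unfolding dpX_def
  proof (intro CollectI conjI allI impI)
    show "vec.subspace M" "tiso M" using sM tM by auto
    fix W' assume W': "vec.subspace W' \<and> tiso W' \<and> M \<subseteq> W'"
    then have "vec.dim W' \<le> dd" using dim_le_d by blast
    then show "W' = M" using vec.subspace_dim_equal[of M W'] W' sM dM by auto
  qed
  have uM: "u0 \<inter> M = W"
  proof
    show "W \<subseteq> u0 \<inter> M" using WM by (auto simp: W_def)
    show "u0 \<inter> M \<subseteq> W"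
    proof
      fix v assume v: "v \<in> u0 \<inter> M"
      then obtain w y where wy: "v = w + y" "w \<in> W" "y \<in> V" unfolding M_def ssum_def by blast
      have "y = v - w" using wy by simp
      then have "y \<in> u0" using vec.subspace_diff[of u0 v w] iu v wy(2) by (auto simp: W_def)
      then have "y \<in> W" using wy(3) AW by (auto simp: V_def)
      then show "v \<in> W" using wy vec.subspace_add[OF sW] by simp
    qed
  qed
  have rank: "dpdist tiso u0 M \<le> dpdist tiso u0 z + dpdist tiso u0 z'"
  proof -
    have sP: "vec.subspace (u0 \<inter> z)" and sP': "vec.subspace (u0 \<inter> z')" using iu iz iz' vec.subspace_inter by blast+
    have g2: "vec.dim (ssum (u0 \<inter> z) (u0 \<inter> z')) + vec.dim ((u0 \<inter> z) \<inter> (u0 \<inter> z')) = vec.dim (u0 \<inter> z) + vec.dim (u0 \<inter> z')"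
      unfolding ssum_def by (rule vec.dim_sums_Int[OF sP sP'])
    have "ssum (u0 \<inter> z) (u0 \<inter> z') \<subseteq> u0" by (rule ssum_sub) (use iu in auto)
    then have "vec.dim (ssum (u0 \<inter> z) (u0 \<inter> z')) \<le> dd" using vec.dim_subset dimX[OF u0] by metis
    moreover have "(u0 \<inter> z) \<inter> (u0 \<inter> z') = W" by (auto simp: W_def)
    moreover have "vec.dim (u0 \<inter> z) \<le> dd" "vec.dim (u0 \<inter> z') \<le> dd"
      using vec.dim_subset[of "u0 \<inter> z" u0] vec.dim_subset[of "u0 \<inter> z'" u0] dimX[OF u0] by auto
    ultimately show ?thesis using g2 unfolding dpdist_def uM by simp
  qed
  have Mx: "le M x"
    unfolding le_iff[OF MX x]
  proof
    show "ssum (u0 \<inter> M) (M \<inter> x) = M"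
    proof
      show "ssum (u0 \<inter> M) (M \<inter> x) \<subseteq> M" by (rule ssum_sub[OF sM]) auto
      show "M \<subseteq> ssum (u0 \<inter> M) (M \<inter> x)"
      proof
        fix m assume "m \<in> M"
        then obtain w v where wv: "m = w + v" "w \<in> W" "v \<in> V" unfolding M_def ssum_def by blast
        have "w \<in> u0 \<inter> M" using wv(2) uM by simp
        moreover have "v \<in> M \<inter> x" using wv(3) VM by (auto simp: V_def)
        ultimately show "m \<in> ssum (u0 \<inter> M) (M \<inter> x)" using wv(1) unfolding ssum_def by blast
      qed
    qed
    show "u0 \<inter> x \<subseteq> M" using AW WM by blast
  qed
  have leM: "le t M" if t: "t \<in> XX" "le t x" "W \<subseteq> t" for t
  proof -
    have T: "ssum (u0 \<inter> t) (t \<inter> x) = t" using t le_iff[OF t(1) x] by auto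
    have it: "isub t" using t(1) by (rule X_isub)
    have tV: "t \<inter> x \<subseteq> V"
      using t1[of t] it t(3) by (auto simp: V_def perp_def)
    show ?thesis
      unfolding le_iff[OF t(1) MX]
    proof
      show "ssum (u0 \<inter> t) (t \<inter> M) = t"
      proof
        show "ssum (u0 \<inter> t) (t \<inter> M) \<subseteq> t" by (rule ssum_sub) (use it in auto)
        show "t \<subseteq> ssum (u0 \<inter> t) (t \<inter> M)"
        proof
          fix v assume "v \<in> t"
          then obtain p q where "v = p + q" "p \<in> u0 \<inter> t" "q \<in> t \<inter> x" using T unfolding ssum_def by blast
          then show "v \<in> ssum (u0 \<inter> t) (t \<inter> M)" using tV VM unfolding ssum_def by blast
        qed
      qed
      show "u0 \<inter> M \<subseteq> t" using uM t(3) by simp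
    qed
  qed
  have zM: "le z M" by (rule leM[OF z zx]) (auto simp: W_def)
  have z'M: "le z' M" by (rule leM[OF z' z'x]) (auto simp: W_def)
  have minM: "le M y" if y: "y \<in> XX" "le z y" "le z' y" "le y x" for y
  proof -
    have iy: "isub y" using y(1) by (rule X_isub)
    have Y1: "u0 \<inter> y \<subseteq> z" using y(2) le_iff[OF z y(1)] by auto
    have Y2: "u0 \<inter> y \<subseteq> z'" using y(3) le_iff[OF z' y(1)] by auto
    have yW: "u0 \<inter> y \<subseteq> W" using Y1 Y2 by (auto simp: W_def)
    have Y: "ssum (u0 \<inter> y) (y \<inter> x) = y" using y(4) le_iff[OF y(1) x] by auto
    have Vy: "V \<subseteq> y"
    proof
      fix v assume v: "v \<in> V"
      have "y \<subseteq> {u. \<beta> v u = 0}"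
      proof
        fix u assume "u \<in> y"
        then obtain b r where br: "u = b + r" "b \<in> u0 \<inter> y" "r \<in> y \<inter> x" using Y unfolding ssum_def by blast
        have "\<beta> v b = 0" using v br(2) yW by (auto simp: V_def perp_def)
        moreover have "\<beta> v r = 0" using v br(3) t1[of x] ix by (auto simp: V_def)
        ultimately show "u \<in> {u. \<beta> v u = 0}"
          using br(1) vec.subspace_add[OF subspace_ker2[of v]] by auto
      qed
      then have "v \<in> x \<inter> perp y" using v by (auto simp: perp_def V_def)
      moreover have "isub (x \<inter> perp y)" using ix subspace_perp vec.subspace_inter t3 by blast
      ultimately show "v \<in> y" using F1[OF y(1)] by blast
    qed
    show ?thesis
      unfolding le_iff[OF MX y(1)]
    proof
      show "ssum (u0 \<inter> M) (M \<inter> y) = M"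
      proof
        show "ssum (u0 \<inter> M) (M \<inter> y) \<subseteq> M" by (rule ssum_sub[OF sM]) auto
        show "M \<subseteq> ssum (u0 \<inter> M) (M \<inter> y)"
          using uM VM Vy unfolding M_def ssum_def by blast
      qed
      show "u0 \<inter> y \<subseteq> M" using yW WM by blast
    qed
  qed
  show ?thesis using MX zM z'M Mx rank minM by blast
qed


definition MUB :: "('k^'n) set \<Rightarrow> ('k^'n) set \<Rightarrow> ('k^'n) set set" where
  "MUB z z' = {y \<in> XX. le z y \<and> le z' y \<and> (\<forall>y'\<in>XX. le z y' \<longrightarrow> le z' y' \<longrightarrow> le y' y \<longrightarrow> y' = y)}"

lemma fz_le: "fz tiso u0 z x = (if le z x then 1 else 0)"
  by (simp add: fz_def le_def)

lemma MUB_sub: "MUB z z' \<subseteq> XX" by (auto simp: MUB_def)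

lemma fin_set: "finite (A :: ('k^'n) set set)"
  by (rule finite_subset[of _ UNIV]) auto

lemma mub_rank:
  assumes z: "z \<in> XX" and z': "z' \<in> XX" and y: "y \<in> MUB z z'"
  shows "dpdist tiso u0 y \<le> dpdist tiso u0 z + dpdist tiso u0 z'"
proof -
  have yX: "y \<in> XX" and zy: "le z y" and z'y: "le z' y"
    and mn: "\<And>y'. y' \<in> XX \<Longrightarrow> le z y' \<Longrightarrow> le z' y' \<Longrightarrow> le y' y \<Longrightarrow> y' = y"
    using y by (auto simp: MUB_def)
  obtain m where m: "m \<in> XX" "le z m" "le z' m" "le m y"
    "dpdist tiso u0 m \<le> dpdist tiso u0 z + dpdist tiso u0 z'"
    using join[OF z z' yX zy z'y] by blast
  have "m = y" using mn[OF m(1-4)] .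
  with m(5) show ?thesis by simp
qed

lemma prod_mub:
  assumes z: "z \<in> XX" and z': "z' \<in> XX" and x: "x \<in> XX"
  shows "fz tiso u0 z x * fz tiso u0 z' x = (\<Sum>y\<in>MUB z z'. fz tiso u0 y x)"
proof -
  have sumeq: "(\<Sum>y\<in>MUB z z'. fz tiso u0 y x) = real (card {y \<in> MUB z z'. le y x})"
    by (simp add: fz_le sum.If_cases fin_set Int_def)
  show ?thesis
  proof (cases "le z x \<and> le z' x")
    case True
    then obtain m where m: "m \<in> XX" "le z m" "le z' m" "le m x"
      "\<forall>y\<in>XX. le z y \<longrightarrow> le z' y \<longrightarrow> le y x \<longrightarrow> le m y"
      using join[OF z z' x] by blast
    have mM: "m \<in> MUB z z'"
      unfolding MUB_def
    proof (intro CollectI conjI ballI impI)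
      fix y' assume y': "y' \<in> XX" "le z y'" "le z' y'" "le y' m"
      have "le y' x" using le_trans[OF y'(1) m(1) x y'(4) m(4)] .
      then have "le m y'" using m(5) y' by blast
      then show "y' = m" using le_antisym[OF y'(1) m(1) y'(4)] by simp
    qed (use m in auto)
    have "{y \<in> MUB z z'. le y x} = {m}"
    proof
      show "{m} \<subseteq> {y \<in> MUB z z'. le y x}" using mM m by simp
      show "{y \<in> MUB z z'. le y x} \<subseteq> {m}"
      proof
        fix y assume y: "y \<in> {y \<in> MUB z z'. le y x}"
        then have yX: "y \<in> XX" and zy: "le z y" and z'y: "le z' y" and yx: "le y x"
          and mn: "\<And>y'. y' \<in> XX \<Longrightarrow> le z y' \<Longrightarrow> le z' y' \<Longrightarrow> le y' y \<Longrightarrow> y' = y"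
          by (auto simp: MUB_def)
        have "le m y" using m(5) yX zy z'y yx by blast
        then have "m = y" using mn[OF m(1-3)] by simp
        then show "y \<in> {m}" by simp
      qed
    qed
    then show ?thesis using True sumeq by (simp add: fz_le)
  next
    case False
    have "{y \<in> MUB z z'. le y x} = {}"
    proof (rule ccontr)
      assume "{y \<in> MUB z z'. le y x} \<noteq> {}"
      then obtain y where y: "y \<in> MUB z z'" "le y x" by blast
      then have "y \<in> XX" "le z y" "le z' y" by (auto simp: MUB_def)
      then have "le z x" "le z' x" using le_trans[OF z _ x] le_trans[OF z' _ x] y(2) by blast+
      with False show False by simp
    qed
    then show ?thesis using False sumeq by (auto simp: fz_le)
  qed
qed

abbreviation ZZ :: "nat \<Rightarrow> ('k^'n) set set" where
  "ZZ j \<equiv> {z \<in> XX. dpdist tiso u0 z \<le> j}"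

lemma sq_hom:
  assumes g: "g \<in> hom_upto tiso u0 e"
  shows "\<exists>F \<in> hom_upto tiso u0 (2 * e). \<forall>x\<in>XX. F x = g x * g x"
proof -
  obtain c where c: "g = (\<lambda>x. \<Sum>z\<in>ZZ e. c z * fz tiso u0 z x)"
    using g by (auto simp: hom_upto_def)
  define c2 where "c2 y = (\<Sum>z\<in>ZZ e. \<Sum>z'\<in>ZZ e. if y \<in> MUB z z' then c z * c z' else 0)" for y
  define F where "F = (\<lambda>x. \<Sum>y\<in>ZZ (2 * e). c2 y * fz tiso u0 y x)"
  have FH: "F \<in> hom_upto tiso u0 (2 * e)" unfolding F_def hom_upto_def by blast
  have "F x = g x * g x" if x: "x \<in> XX" for x
  proof -
    have "g x * g x = (\<Sum>z\<in>ZZ e. \<Sum>z'\<in>ZZ e. c z * c z' * (fz tiso u0 z x * fz tiso u0 z' x))"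
      unfolding c by (simp add: sum_product algebra_simps)
    also have "\<dots> = (\<Sum>z\<in>ZZ e. \<Sum>z'\<in>ZZ e. \<Sum>y\<in>ZZ (2 * e). (if y \<in> MUB z z' then c z * c z' else 0) * fz tiso u0 y x)"
    proof (intro sum.cong refl)
      fix z z' assume zz: "z \<in> ZZ e" "z' \<in> ZZ e"
      have sub: "MUB z z' \<subseteq> ZZ (2 * e)"
      proof
        fix y assume "y \<in> MUB z z'"
        then have "y \<in> XX" "dpdist tiso u0 y \<le> dpdist tiso u0 z + dpdist tiso u0 z'"
          using MUB_sub mub_rank zz by auto
        then show "y \<in> ZZ (2 * e)" using zz by auto
      qed
      have "c z * c z' * (fz tiso u0 z x * fz tiso u0 z' x) = c z * c z' * (\<Sum>y\<in>MUB z z'. fz tiso u0 y x)"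
        using prod_mub zz x by simp
      also have "\<dots> = (\<Sum>y\<in>MUB z z'. c z * c z' * fz tiso u0 y x)" by (simp add: sum_distrib_left)
      also have "\<dots> = (\<Sum>y\<in>ZZ (2 * e). if y \<in> MUB z z' then c z * c z' * fz tiso u0 y x else 0)"
        using sub by (simp add: sum.If_cases fin_set Int_absorb1 inf.absorb_iff2)
      also have "\<dots> = (\<Sum>y\<in>ZZ (2 * e). (if y \<in> MUB z z' then c z * c z' else 0) * fz tiso u0 y x)"
        by (intro sum.cong refl) simp
      finally show "c z * c z' * (fz tiso u0 z x * fz tiso u0 z' x) = \<dots>" .
    qed
    also have "\<dots> = (\<Sum>y\<in>ZZ (2 * e). \<Sum>z\<in>ZZ e. \<Sum>z'\<in>ZZ e. (if y \<in> MUB z z' then c z * c z' else 0) * fz tiso u0 y x)"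
      by (simp add: sum.swap[of _ "ZZ (2 * e)"])
    also have "\<dots> = F x" unfolding F_def c2_def by (simp add: sum_distrib_right)
    finally show ?thesis by simp
  qed
  with FH show ?thesis by blast
qed

end


interpretation fvp: vector_space_pair "fscale :: real \<Rightarrow> ('a \<Rightarrow> real) \<Rightarrow> 'a \<Rightarrow> real" "fscale :: real \<Rightarrow> ('a \<Rightarrow> real) \<Rightarrow> 'a \<Rightarrow> real"
  by unfold_locales (auto simp: fscale_def algebra_simps)

lemma sum_fun_apply: "(\<Sum>i\<in>A. f i) x = (\<Sum>i\<in>A. (f i x :: real))"
  by (induction A rule: infinite_finite_induct) auto

lemma restr_linear: "Vector_Spaces.linear fscale fscale (restr A)"
  unfolding Vector_Spaces.linear_iff
proof (intro conjI allI)
  show "vector_space (fscale :: real \<Rightarrow> ('a \<Rightarrow> real) \<Rightarrow> 'a \<Rightarrow> real)" by (rule fvs.vector_space_axioms)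
  then show "vector_space (fscale :: real \<Rightarrow> ('a \<Rightarrow> real) \<Rightarrow> 'a \<Rightarrow> real)" .
  fix x y :: "'a \<Rightarrow> real" show "restr A (x + y) = restr A x + restr A y"
    by (auto simp: restr_def)
  fix c :: real show "restr A (fscale c x) = fscale c (restr A x)"
    by (auto simp: restr_def fscale_def)
qed

lemma hom_subspace: "fvs.subspace (hom_upto tiso u0 j)"
  unfolding fvs.subspace_def
proof (intro conjI ballI allI)
  let ?Z = "{z \<in> dpX tiso. dpdist tiso u0 z \<le> j}"
  show "0 \<in> hom_upto tiso u0 j" unfolding hom_upto_def
    by (rule CollectI, rule exI[of _ "\<lambda>_. 0"]) auto
  fix g h assume "g \<in> hom_upto tiso u0 j" "h \<in> hom_upto tiso u0 j"
  then obtain c d where cd: "g = (\<lambda>x. \<Sum>z\<in>?Z. c z * fz tiso u0 z x)" "h = (\<lambda>x. \<Sum>z\<in>?Z. d z * fz tiso u0 z x)"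
    unfolding hom_upto_def by blast
  show "g + h \<in> hom_upto tiso u0 j" unfolding hom_upto_def
    by (rule CollectI, rule exI[of _ "\<lambda>z. c z + d z"]) (auto simp: cd sum.distrib algebra_simps)
next
  fix a :: real and g assume "g \<in> hom_upto tiso u0 j"
  then obtain c where cd: "g = (\<lambda>x. \<Sum>z\<in>{z \<in> dpX tiso. dpdist tiso u0 z \<le> j}. c z * fz tiso u0 z x)"
    unfolding hom_upto_def by blast
  show "fscale a g \<in> hom_upto tiso u0 j" unfolding hom_upto_def
    by (rule CollectI, rule exI[of _ "\<lambda>z. a * c z"]) (auto simp: cd fscale_def sum_distrib_left algebra_simps)
qed

theorem theoremA6:
  fixes tiso :: "('k::{finite,field}^'n::finite) set \<Rightarrow> bool"
    and u0 :: "('k^'n) set"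
    and e :: nat
    and Y :: "('k^'n) set set"
    and w :: "('k^'n) set \<Rightarrow> real"
  assumes form: "polar_iso tiso"
    and u0: "u0 \<in> dpX tiso"
    and Y: "Y \<subseteq> dpX tiso"
    and wpos: "\<forall>y\<in>Y. w y > 0"
    and design: "\<forall>f \<in> hom_upto tiso u0 (2 * e).
       (\<Sum>r\<in>dpdist tiso u0 ` Y.
          (\<Sum>y\<in>Y \<inter> shell tiso u0 r. w y) / real (card (shell tiso u0 r))
            * (\<Sum>x\<in>shell tiso u0 r. f x))
       = (\<Sum>y\<in>Y. w y * f y)"
  shows "real (card Y) \<ge>
           real (fvs.dim (restr (\<Union>r\<in>dpdist tiso u0 ` Y. shell tiso u0 r) ` hom_upto tiso u0 e))"
proof -
  obtain \<beta> where pb: "polar tiso \<beta>" using polar_form_ok[OF form] by blast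
  interpret P: polar0 tiso \<beta> u0 using pb u0 by (simp add: polar0_def polar0_axioms_def)
  define S where "S = (\<Union>r\<in>dpdist tiso u0 ` Y. shell tiso u0 r)"
  define H where "H = restr S ` hom_upto tiso u0 e"
  have finY: "finite Y" by (rule P.fin_set)
  have finsh: "finite (shell tiso u0 r)" for r by (rule P.fin_set)
  have YS: "Y \<subseteq> S" using Y by (auto simp: S_def shell_def)
  have key: "\<forall>x\<in>S. g x = 0" if g: "g \<in> hom_upto tiso u0 e" and gY: "\<forall>y\<in>Y. g y = 0" for g
  proof -
    obtain F where F: "F \<in> hom_upto tiso u0 (2 * e)" "\<forall>x\<in>dpX tiso. F x = g x * g x"
      using P.sq_hom[OF g] by blast
    define a where "a r = (\<Sum>y\<in>Y \<inter> shell tiso u0 r. w y) / real (card (shell tiso u0 r))" for r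
    have eq: "(\<Sum>r\<in>dpdist tiso u0 ` Y. a r * (\<Sum>x\<in>shell tiso u0 r. F x)) = (\<Sum>y\<in>Y. w y * F y)"
      using design F(1) unfolding a_def by blast
    have "(\<Sum>y\<in>Y. w y * F y) = 0" using F(2) gY Y by (intro sum.neutral) auto
    with eq have eq0: "(\<Sum>r\<in>dpdist tiso u0 ` Y. a r * (\<Sum>x\<in>shell tiso u0 r. F x)) = 0" by simp
    have Fnn: "\<forall>x\<in>shell tiso u0 r. F x \<ge> 0" for r using F(2) by (auto simp: shell_def)
    have apos: "a r > 0" if rR: "r \<in> dpdist tiso u0 ` Y" for r
    proof -
      obtain y0 where y0: "y0 \<in> Y" "r = dpdist tiso u0 y0" using rR by blast
      have y0s: "y0 \<in> Y \<inter> shell tiso u0 r" using y0 Y by (auto simp: shell_def)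
      have "(\<Sum>y\<in>Y \<inter> shell tiso u0 r. w y) > 0"
        by (rule sum_pos) (use finY y0s wpos in auto)
      moreover have "card (shell tiso u0 r) > 0" using finsh y0s by (auto simp: card_gt_0_iff)
      ultimately show ?thesis unfolding a_def by simp
    qed
    have nn: "0 \<le> a r * (\<Sum>x\<in>shell tiso u0 r. F x)" if rR: "r \<in> dpdist tiso u0 ` Y" for r
    proof -
      have "0 \<le> a r" using apos[OF rR] by simp
      moreover have "0 \<le> (\<Sum>x\<in>shell tiso u0 r. F x)" using Fnn[of r] by (simp add: sum_nonneg)
      ultimately show ?thesis by simp
    qed
    have "\<forall>r\<in>dpdist tiso u0 ` Y. a r * (\<Sum>x\<in>shell tiso u0 r. F x) = 0"
      using eq0 sum_nonneg_eq_0_iff[of "dpdist tiso u0 ` Y" "\<lambda>r. a r * (\<Sum>x\<in>shell tiso u0 r. F x)"] nn finY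
      by auto
    then have "\<forall>r\<in>dpdist tiso u0 ` Y. (\<Sum>x\<in>shell tiso u0 r. F x) = 0"
      using apos by (metis (no_types, lifting) mult_eq_0_iff order_less_irrefl)
    then have "\<forall>r\<in>dpdist tiso u0 ` Y. \<forall>x\<in>shell tiso u0 r. F x = 0"
      using Fnn finsh sum_nonneg_eq_0_iff by blast
    then have "\<forall>x\<in>S. F x = 0" by (auto simp: S_def)
    then show ?thesis using F(2) by (auto simp: S_def shell_def)
  qed
  have lin: "Vector_Spaces.linear fscale fscale (restr Y)" by (rule restr_linear)
  have subH: "fvs.subspace H" unfolding H_def
    by (rule fvp.linear_subspace_image[OF restr_linear hom_subspace])
  have inj: "inj_on (restr Y) H"
  proof
    fix h1 h2 assume h: "h1 \<in> H" "h2 \<in> H" "restr Y h1 = restr Y h2"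
    then obtain g1 g2 where g: "g1 \<in> hom_upto tiso u0 e" "g2 \<in> hom_upto tiso u0 e" "h1 = restr S g1" "h2 = restr S g2"
      unfolding H_def by blast
    have gd: "g1 - g2 \<in> hom_upto tiso u0 e" using fvs.subspace_diff[OF hom_subspace g(1,2)] .
    have "\<forall>y\<in>Y. (g1 - g2) y = 0"
    proof
      fix y assume "y \<in> Y"
      then have "restr Y h1 y = restr Y h2 y" "y \<in> S" using h(3) YS by auto
      then show "(g1 - g2) y = 0" using \<open>y \<in> Y\<close> g(3,4) by (simp add: restr_def)
    qed
    then have "\<forall>x\<in>S. (g1 - g2) x = 0" using key[OF gd] by blast
    then show "h1 = h2" using g(3,4) by (auto simp: restr_def)
  qed
  obtain B where B: "B \<subseteq> H" "fvs.independent B" "H \<subseteq> fvs.span B" "card B = fvs.dim H"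
    using fvs.basis_exists[of H] by blast
  have spB: "fvs.span B \<subseteq> H" using fvs.span_mono[OF B(1)] subH fvs.span_eq_iff by blast
  have injB: "inj_on (restr Y) (fvs.span B)" using inj_on_subset[OF inj spB] .
  have indB: "fvs.independent (restr Y ` B)"
    by (rule fvp.linear_independent_injective_image[OF lin B(2) injB])
  define D where "D = (\<lambda>y. (\<lambda>x. if x = y then 1 else 0 :: real)) ` Y"
  have finD: "finite D" using finY by (simp add: D_def)
  have "restr Y ` B \<subseteq> fvs.span D"
  proof
    fix h assume "h \<in> restr Y ` B"
    then obtain b where hb: "h = restr Y b" by blast
    have "h = (\<Sum>y\<in>Y. fscale (b y) (\<lambda>x. if x = y then 1 else 0))"
      by (rule ext) (simp add: hb restr_def sum_fun_apply fscale_def finY if_distrib cong: if_cong)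
    also have "\<dots> \<in> fvs.span D"
      by (intro fvs.span_sum fvs.span_scale fvs.span_base) (auto simp: D_def)
    finally show "h \<in> fvs.span D" .
  qed
  then have "card (restr Y ` B) \<le> card D" using fvs.independent_span_bound[OF finD indB] by blast
  also have "\<dots> \<le> card Y" unfolding D_def by (rule card_image_le[OF finY])
  finally have "card (restr Y ` B) \<le> card Y" .
  moreover have "card (restr Y ` B) = card B"
    by (rule card_image) (rule inj_on_subset[OF inj B(1)])
  ultimately show ?thesis using B(4) by (simp add: H_def S_def)
qed

end
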